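(* Let $e$ be an idempotent binary relation on a finite set $Q$ (i.e. $e\circ e=e$), let $S=\{s\in Q\mid (s,s)\in e\}$ be its set of fixed points, and let $\Gamma$ be the set of strongly connected components of the restriction of $e$ to $S$ (viewed as a directed graph). Then: (1) for all $p,q\in Q$, $(p,q)\in e$ if and only if there exists $s\in S$ with $(p,s)\in e$ and $(s,q)\in e$; (2) $e=\ell r$, where $\ell=\{(p,\sigma)\in Q\times\Gamma\mid (p,s)\in e\text{ for some }s\in\sigma\}$ and $r=\{(\sigma,q)\in\Gamma\times Q\mid (s,q)\in e\text{ for some }s\in\sigma\}$.
   Context: Relations are composed as follows: for relations $m\subseteq X\times Y$, $n\subseteq Y\times Z$, $mn=\{(x,z)\mid \exists y,\ (x,y)\in m,\ (y,z)\in n\}$. *)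

theory Defs
  imports Main
begin

definition fixpts :: "'a set \<Rightarrow> 'a rel \<Rightarrow> 'a set" where
  "fixpts Q e = {s \<in> Q. (s, s) \<in> e}"

definition restrict_rel :: "'a rel \<Rightarrow> 'a set \<Rightarrow> 'a rel" where
  "restrict_rel e S = e \<inter> (S \<times> S)"

definition sccs :: "'a set \<Rightarrow> 'a rel \<Rightarrow> 'a set set" where
  "sccs V E = V // {(x, y). x \<in> V \<and> y \<in> V \<and> (x, y) \<in> E\<^sup>* \<and> (y, x) \<in> E\<^sup>*}"

end

theory Submission
  imports Defs
begin

lemma trans_e: assumes "e O e = e" "(a,b)\<in>e" "(b,c)\<in>e" shows "(a,c)\<in>e"
  using assms by blast

lemma chain_e:
  assumes "e O e = e" "\<And>k. (f k, f (Suc k)) \<in> e"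
  shows "(f i, f (Suc (i + m))) \<in> e"
proof (induction m)
  case 0 then show ?case using assms by simp
next
  case (Suc m) then show ?case using assms trans_e[of e] by (metis add_Suc_right)
qed

lemma part1:
  assumes fin: "finite Q" and sub: "e \<subseteq> Q \<times> Q" and idem: "e O e = e"
    and pq: "(p,q) \<in> e"
  shows "\<exists>s. (s,s)\<in>e \<and> (p,s)\<in>e \<and> (s,q)\<in>e"
proof -
  define g where "g x = (SOME y. (x,y)\<in>e \<and> (y,q)\<in>e)" for x
  have gx: "(x, g x) \<in> e \<and> (g x, q) \<in> e" if "(x,q)\<in>e" for x
  proof -
    from that idem have "\<exists>y. (x,y)\<in>e \<and> (y,q)\<in>e" by blast
    then show ?thesis unfolding g_def by (rule someI_ex)
  qed
  define f where "f k = (g ^^ k) p" for k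
  have inv: "(f k, q) \<in> e" for k
    by (induction k) (auto simp: f_def pq dest: gx)
  have step: "(f k, f (Suc k)) \<in> e" for k
    using gx[OF inv[of k]] by (simp add: f_def)
  have fQ: "f ` {0..card Q} \<subseteq> Q" using inv sub by blast
  have "\<not> inj_on f {0..card Q}"
  proof
    assume "inj_on f {0..card Q}"
    then have "card (f ` {0..card Q}) = card {0..card Q}" by (rule card_image)
    moreover have "card (f ` {0..card Q}) \<le> card Q" using fQ fin card_mono by blast
    ultimately show False by simp
  qed
  then obtain i j where ij: "i \<in> {0..card Q}" "j \<in> {0..card Q}" "i \<noteq> j" "f i = f j"
    unfolding inj_on_def by blast
  obtain a b where ab: "a < b" "f a = f b"
    using ij by (metis linorder_neqE_nat)
  then obtain m where b: "b = Suc (a + m)" by (metis less_iff_Suc_add)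
  have ss: "(f a, f a) \<in> e" using chain_e[of e f a m, OF idem step] ab b by simp
  have ps: "(p, f a) \<in> e"
  proof (cases a)
    case 0 then show ?thesis using ss by (simp add: f_def)
  next
    case (Suc n) then show ?thesis using chain_e[of e f 0 n, OF idem step] by (simp add: f_def)
  qed
  show ?thesis using ss ps inv by blast
qed

lemma rt_e:
  assumes idem: "e O e = e" and "(s1,s1)\<in>e" and "(s1,s2) \<in> (restrict_rel e S)\<^sup>*"
  shows "(s1,s2)\<in>e"
  using assms(3)
proof (induction rule: rtrancl_induct)
  case base then show ?case using assms(2) .
next
  case (step y z) then show ?case using idem unfolding restrict_rel_def by blast
qed

theorem mainTheorem6:
  fixes Q :: "'a set" and e :: "'a rel"
  assumes "finite Q" and "e \<subseteq> Q \<times> Q" and "e O e = e"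
  defines "S \<equiv> fixpts Q e"
  defines "\<Gamma> \<equiv> sccs S (restrict_rel e S)"
  defines "l \<equiv> {(p, \<sigma>). p \<in> Q \<and> \<sigma> \<in> \<Gamma> \<and> (\<exists>s\<in>\<sigma>. (p, s) \<in> e)}"
  defines "r \<equiv> {(\<sigma>, q). \<sigma> \<in> \<Gamma> \<and> q \<in> Q \<and> (\<exists>s\<in>\<sigma>. (s, q) \<in> e)}"
  shows "(\<forall>p\<in>Q. \<forall>q\<in>Q. (p, q) \<in> e \<longleftrightarrow> (\<exists>s\<in>S. (p, s) \<in> e \<and> (s, q) \<in> e))
         \<and> e = l O r"
proof -
  have P1: "(p, q) \<in> e \<Longrightarrow> \<exists>s\<in>S. (p, s) \<in> e \<and> (s, q) \<in> e" for p q
  proof -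
    assume "(p,q)\<in>e"
    from part1[OF assms(1-3) this] obtain s where "(s,s)\<in>e" "(p,s)\<in>e" "(s,q)\<in>e" by blast
    moreover then have "s \<in> Q" using assms(2) by blast
    ultimately show ?thesis unfolding S_def fixpts_def by blast
  qed
  have first: "\<forall>p\<in>Q. \<forall>q\<in>Q. (p, q) \<in> e \<longleftrightarrow> (\<exists>s\<in>S. (p, s) \<in> e \<and> (s, q) \<in> e)"
    using P1 assms(3) by blast
  define R where "R = {(x, y). x \<in> S \<and> y \<in> S \<and> (x, y) \<in> (restrict_rel e S)\<^sup>* \<and> (y, x) \<in> (restrict_rel e S)\<^sup>*}"
  have G: "\<Gamma> = S // R" unfolding \<Gamma>_def sccs_def R_def by simp
  have "e \<subseteq> l O r"
  proof
    fix x assume x: "x \<in> e"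
    obtain p q where xpq: "x = (p,q)" by force
    from P1 x xpq obtain s where s: "s\<in>S" "(p,s)\<in>e" "(s,q)\<in>e" by blast
    have sig: "R``{s} \<in> \<Gamma>" using s(1) G by (auto intro: quotientI)
    have "s \<in> R``{s}" using s(1) unfolding R_def by auto
    moreover have "p \<in> Q" "q \<in> Q" using x xpq assms(2) by auto
    ultimately have "(p, R``{s}) \<in> l" "(R``{s}, q) \<in> r"
      using sig s unfolding l_def r_def by auto
    then show "x \<in> l O r" using xpq by blast
  qed
  moreover have "l O r \<subseteq> e"
  proof
    fix x assume "x \<in> l O r"
    then obtain p \<sigma> q s1 s2 where x: "x = (p,q)" "\<sigma> \<in> \<Gamma>" "s1 \<in> \<sigma>" "s2 \<in> \<sigma>"
      "(p,s1)\<in>e" "(s2,q)\<in>e" unfolding l_def r_def by blast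
    from x(2) G obtain c where c: "c \<in> S" "\<sigma> = R``{c}" by (auto elim: quotientE)
    have "(s1,s2) \<in> (restrict_rel e S)\<^sup>*"
      using c x(3,4) unfolding R_def by (auto intro: rtrancl_trans)
    moreover have "s1 \<in> S" using c x(3) unfolding R_def by auto
    then have "(s1,s1)\<in>e" unfolding S_def fixpts_def by auto
    ultimately have "(s1,s2)\<in>e" using rt_e[OF assms(3)] by blast
    then show "x \<in> e" using x assms(3) by blast
  qed
  ultimately show ?thesis using first by blast
qed

end
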